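(* Setting: $\mathcal{I}$ and $\mathcal{J}$ are finite sets; for each $i\in\mathcal{I}$, $\mathcal{A}_i$ is a finite set with $|\mathcal{A}_i|\ge2$; for each $j\in\mathcal{J}$, $\mathcal{I}_j\subseteq\mathcal{I}$, and $\mathcal{J}_i=\{j\in\mathcal{J}: i\in\mathcal{I}_j\}$. Let $\mathcal{L}=\{j\in\mathcal{J}:|\mathcal{I}_j|\ge2\}$ and $\mathcal{Y}=\{i\in\mathcal{I}:\exists j\in\mathcal{J}_i \text{ with } |\mathcal{I}_j|=1\}$. For $i\in\mathcal{Y}$ let $h_i:\mathcal{A}_i\to(0,\infty)$, and for each $j\in\mathcal{L}$ let $\mathcal{B}_j\subseteq\prod_{i\in\mathcal{I}_j}\mathcal{A}_i$ (elements written $\mathbf{b}=(b_i)_{i\in\mathcal{I}_j}$). Let $\mathcal{B}=\{\mathbf{x}\in\prod_{i\in\mathcal{I}}\mathcal{A}_i:(x_i)_{i\in\mathcal{I}_j}\in\mathcal{B}_j\ \forall j\in\mathcal{L}\}$, and assume $\mathbf{P}_{\mathcal{Y}}:\mathbf{x}\mapsto(x_i)_{i\in\mathcal{Y}}$ is injective on $\mathcal{B}$. For each $i\in\mathcal{I}$ fix $\alpha_i\in\mathcal{A}_i$, let $\mathcal{A}_i^-=\mathcal{A}_i\setminus\{\alpha_i\}$, and for $i\in\mathcal{I}\setminus\mathcal{Y}$ fix $t_i\in\mathcal{J}_i$. Relaxed LP A (variables $\tilde g_i^{(\alpha)}$ for $i\in\mathcal{Y},\alpha\in\mathcal{A}_i^-$,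 and $p_{j,\mathbf{b}}$ for $j\in\mathcal{L},\mathbf{b}\in\mathcal{B}_j$): maximize $\sum_{i\in\mathcal{Y}}\sum_{\alpha\in\mathcal{A}_i^-}\log\frac{h_i(\alpha)}{h_i(\alpha_i)}\,\tilde g_i^{(\alpha)}$ over the polytope $\tilde{\mathcal{Q}}$ given by: $p_{j,\mathbf{b}}\ge0$ for all $j\in\mathcal{L},\mathbf{b}\in\mathcal{B}_j$; $\sum_{\mathbf{b}\in\mathcal{B}_j}p_{j,\mathbf{b}}=1$ for all $j\in\mathcal{L}$; $\tilde g_i^{(\alpha)}=\sum_{\mathbf{b}\in\mathcal{B}_j,b_i=\alpha}p_{j,\mathbf{b}}$ for all $i\in\mathcal{Y}$, $j\in\mathcal{J}_i\cap\mathcal{L}$, $\alpha\in\mathcal{A}_i^-$; and $\sum_{\mathbf{b}\in\mathcal{B}_j,b_i=\alpha}p_{j,\mathbf{b}}=\sum_{\mathbf{b}\in\mathcal{B}_{t_i},b_i=\alpha}p_{t_i,\mathbf{b}}$ for all $i\in\mathcal{I}\setminus\mathcal{Y}$, $j\in\mathcal{J}_i\setminus\{t_i\}$, $\alpha\in\mathcal{A}_i^-$. If the LP solution $(\tilde{\mathbf{g}}_{\mathrm{out}},\mathbf{p})$ is integral (all coordinates integers), the receiver outputs $\mathbf{x}_{\mathrm{out}}=\mathbf{P}_{\mathcal{Y}}^{-1}(\tilde{\boldsymbol{\Xi}}^{-1}(\tilde{\mathbf{g}}_{\mathrm{out}}))$, where $\tilde{\boldsymbol{\Xi}}(\mathbf{x}_{\mathcal{Y}})=(([\gamma=x_i])_{\gamma\in\mathcal{A}_i^-})_{i\in\mathcal{Y}}$;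 otherwise it reports a receiver failure. Relaxed LP B (variables $g_i^{(\alpha)}$ for $i\in\mathcal{I},\alpha\in\mathcal{A}_i$, and $p_{j,\mathbf{b}}$ as before): maximize $\sum_{i\in\mathcal{Y}}\sum_{\alpha\in\mathcal{A}_i}\log h_i(\alpha)\,g_i^{(\alpha)}$ over the polytope $\mathcal{Q}$ given by: $p_{j,\mathbf{b}}\ge0$; $\sum_{\mathbf{b}\in\mathcal{B}_j}p_{j,\mathbf{b}}=1$ for all $j\in\mathcal{L}$; and $g_i^{(\alpha)}=\sum_{\mathbf{b}\in\mathcal{B}_j,b_i=\alpha}p_{j,\mathbf{b}}$ for all $j\in\mathcal{L}$, $i\in\mathcal{I}_j$, $\alpha\in\mathcal{A}_i$. If the LP solution $(\bar{\mathbf{g}}_{\mathrm{out}},\mathbf{p})$ is integral, the receiver outputs $\mathbf{x}_{\mathrm{out}}=\bar{\boldsymbol{\Xi}}^{-1}(\bar{\mathbf{g}}_{\mathrm{out}})$, where $\bar{\boldsymbol{\Xi}}(\mathbf{x})=(([\gamma=x_i])_{\gamma\in\mathcal{A}_i})_{i\in\mathcal{I}}$; otherwise it reports a receiver failure. Claim: LP B produces the same output (configuration or receiver failure) as LP A. Moreover, if the receiver output is a configuration, then it is the optimum configuration, i.e. $\mathbf{x}_{\mathrm{out}}\in\mathcal{B}$ and $\mathbf{x}_{\mathrm{out}}=\mathbf{x}_{\mathrm{opt}}$, where $\mathbf{x}_{\mathrm{opt}}$ maximizes $\sum_{i\in\mathcal{Y}}\log h_i(x_i)$ over $\mathbf{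x}\in\mathcal{B}$.
   Context: $[P]$ denotes $1$ if the predicate $P$ holds and $0$ otherwise. The setting models maximization of a product of functions $u(\mathbf{x})=\prod_{i\in\mathcal{Y}}h_i(x_i)\prod_{j\in\mathcal{L}}[(x_i)_{i\in\mathcal{I}_j}\in\mathcal{B}_j]$ described by a factor graph, where pendant (degree-one) factor nodes are collected into the positive functions $h_i$ and every non-pendant factor node $j\in\mathcal{L}$ is the indicator function of a local behaviour $\mathcal{B}_j$; the optimum configuration $\mathbf{x}_{\mathrm{opt}}$ maximizes $u$. $\mathbf{P}_{\mathcal{Y}}^{-1}$ denotes the inverse of $\mathbf{P}_{\mathcal{Y}}$ restricted to $\mathcal{B}$. *)

theory Defs
  imports Complex_Main "HOL-Library.FuncSet"
begin

text \<open>Index types: 'i variable nodes, 'j factor nodes, 'a symbols.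
  Configurations are functions 'i \<Rightarrow> 'a (extensional on the relevant index set).\<close>

datatype 'x rx_output = Config 'x | Failure

definition Jset :: "'j set \<Rightarrow> ('j \<Rightarrow> 'i set) \<Rightarrow> 'i \<Rightarrow> 'j set" where
  "Jset J Ij i = {j \<in> J. i \<in> Ij j}"

definition Lset :: "'j set \<Rightarrow> ('j \<Rightarrow> 'i set) \<Rightarrow> 'j set" where
  "Lset J Ij = {j \<in> J. 2 \<le> card (Ij j)}"

definition Yset :: "'i set \<Rightarrow> 'j set \<Rightarrow> ('j \<Rightarrow> 'i set) \<Rightarrow> 'i set" where
  "Yset I J Ij = {i \<in> I. \<exists>j \<in> Jset J Ij i. card (Ij j) = 1}"

definition Bset :: "'i set \<Rightarrow> ('i \<Rightarrow> 'a set) \<Rightarrow> 'j set \<Rightarrow> ('j \<Rightarrow> 'i set)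
    \<Rightarrow> ('j \<Rightarrow> ('i \<Rightarrow> 'a) set) \<Rightarrow> ('i \<Rightarrow> 'a) set" where
  "Bset I A J Ij Bj = {x \<in> Pi\<^sub>E I A. \<forall>j \<in> Lset J Ij. restrict x (Ij j) \<in> Bj j}"

definition marg :: "('j \<Rightarrow> ('i \<Rightarrow> 'a) set) \<Rightarrow> ('j \<Rightarrow> ('i \<Rightarrow> 'a) \<Rightarrow> real) \<Rightarrow> 'j \<Rightarrow> 'i \<Rightarrow> 'a \<Rightarrow> real" where
  "marg Bj p j i a = (\<Sum>b \<in> {b \<in> Bj j. b i = a}. p j b)"

definition feasA :: "'i set \<Rightarrow> ('i \<Rightarrow> 'a set) \<Rightarrow> 'j set \<Rightarrow> ('j \<Rightarrow> 'i set)
    \<Rightarrow> ('j \<Rightarrow> ('i \<Rightarrow> 'a) set) \<Rightarrow> ('i \<Rightarrow> 'a) \<Rightarrow> ('i \<Rightarrow> 'j)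
    \<Rightarrow> ('i \<Rightarrow> 'a \<Rightarrow> real) \<times> ('j \<Rightarrow> ('i \<Rightarrow> 'a) \<Rightarrow> real) \<Rightarrow> bool" where
  "feasA I A J Ij Bj \<alpha> t s = (case s of (gt, p) \<Rightarrow>
     (\<forall>j \<in> Lset J Ij. \<forall>b \<in> Bj j. 0 \<le> p j b) \<and>
     (\<forall>j \<in> Lset J Ij. (\<Sum>b \<in> Bj j. p j b) = 1) \<and>
     (\<forall>i \<in> Yset I J Ij. \<forall>j \<in> Jset J Ij i \<inter> Lset J Ij. \<forall>a \<in> A i - {\<alpha> i}.
        gt i a = marg Bj p j i a) \<and>
     (\<forall>i \<in> I - Yset I J Ij. \<forall>j \<in> Jset J Ij i - {t i}. \<forall>a \<in> A i - {\<alpha> i}.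
        marg Bj p j i a = marg Bj p (t i) i a))"

definition objA :: "'i set \<Rightarrow> ('i \<Rightarrow> 'a set) \<Rightarrow> 'j set \<Rightarrow> ('j \<Rightarrow> 'i set)
    \<Rightarrow> ('i \<Rightarrow> 'a \<Rightarrow> real) \<Rightarrow> ('i \<Rightarrow> 'a)
    \<Rightarrow> ('i \<Rightarrow> 'a \<Rightarrow> real) \<times> ('j \<Rightarrow> ('i \<Rightarrow> 'a) \<Rightarrow> real) \<Rightarrow> real" where
  "objA I A J Ij h \<alpha> s = (case s of (gt, p) \<Rightarrow>
     (\<Sum>i \<in> Yset I J Ij. \<Sum>a \<in> A i - {\<alpha> i}. ln (h i a / h i (\<alpha> i)) * gt i a))"

definition optA where
  "optA I A J Ij Bj h \<alpha> t s \<longleftrightarrow> feasA I A J Ij Bj \<alpha> t s \<and>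
     (\<forall>s'. feasA I A J Ij Bj \<alpha> t s' \<longrightarrow> objA I A J Ij h \<alpha> s' \<le> objA I A J Ij h \<alpha> s)"

definition integralA :: "'i set \<Rightarrow> ('i \<Rightarrow> 'a set) \<Rightarrow> 'j set \<Rightarrow> ('j \<Rightarrow> 'i set)
    \<Rightarrow> ('j \<Rightarrow> ('i \<Rightarrow> 'a) set) \<Rightarrow> ('i \<Rightarrow> 'a)
    \<Rightarrow> ('i \<Rightarrow> 'a \<Rightarrow> real) \<times> ('j \<Rightarrow> ('i \<Rightarrow> 'a) \<Rightarrow> real) \<Rightarrow> bool" where
  "integralA I A J Ij Bj \<alpha> s = (case s of (gt, p) \<Rightarrow>
     (\<forall>i \<in> Yset I J Ij. \<forall>a \<in> A i - {\<alpha> i}. gt i a \<in> \<int>) \<and>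
     (\<forall>j \<in> Lset J Ij. \<forall>b \<in> Bj j. p j b \<in> \<int>))"

definition XiA_inv :: "'i set \<Rightarrow> ('i \<Rightarrow> 'a set) \<Rightarrow> 'j set \<Rightarrow> ('j \<Rightarrow> 'i set)
    \<Rightarrow> ('i \<Rightarrow> 'a) \<Rightarrow> ('i \<Rightarrow> 'a \<Rightarrow> real) \<Rightarrow> ('i \<Rightarrow> 'a)" where
  "XiA_inv I A J Ij \<alpha> gt = (THE xY. xY \<in> Pi\<^sub>E (Yset I J Ij) A \<and>
     (\<forall>i \<in> Yset I J Ij. \<forall>\<gamma> \<in> A i - {\<alpha> i}. gt i \<gamma> = (if \<gamma> = xY i then 1 else 0)))"

definition PY_inv :: "'i set \<Rightarrow> ('i \<Rightarrow> 'a set) \<Rightarrow> 'j set \<Rightarrow> ('j \<Rightarrow> 'i set)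
    \<Rightarrow> ('j \<Rightarrow> ('i \<Rightarrow> 'a) set) \<Rightarrow> ('i \<Rightarrow> 'a) \<Rightarrow> ('i \<Rightarrow> 'a)" where
  "PY_inv I A J Ij Bj xY = (THE x. x \<in> Bset I A J Ij Bj \<and> restrict x (Yset I J Ij) = xY)"

definition outA where
  "outA I A J Ij Bj \<alpha> s =
     (if integralA I A J Ij Bj \<alpha> s
      then Config (PY_inv I A J Ij Bj (XiA_inv I A J Ij \<alpha> (fst s)))
      else Failure)"

definition feasB :: "'i set \<Rightarrow> ('i \<Rightarrow> 'a set) \<Rightarrow> 'j set \<Rightarrow> ('j \<Rightarrow> 'i set)
    \<Rightarrow> ('j \<Rightarrow> ('i \<Rightarrow> 'a) set)
    \<Rightarrow> ('i \<Rightarrow> 'a \<Rightarrow> real) \<times> ('j \<Rightarrow> ('i \<Rightarrow> 'a) \<Rightarrow> real) \<Rightarrow> bool" where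
  "feasB I A J Ij Bj s = (case s of (g, p) \<Rightarrow>
     (\<forall>j \<in> Lset J Ij. \<forall>b \<in> Bj j. 0 \<le> p j b) \<and>
     (\<forall>j \<in> Lset J Ij. (\<Sum>b \<in> Bj j. p j b) = 1) \<and>
     (\<forall>j \<in> Lset J Ij. \<forall>i \<in> Ij j. \<forall>a \<in> A i. g i a = marg Bj p j i a))"

definition objB :: "'i set \<Rightarrow> ('i \<Rightarrow> 'a set) \<Rightarrow> 'j set \<Rightarrow> ('j \<Rightarrow> 'i set)
    \<Rightarrow> ('i \<Rightarrow> 'a \<Rightarrow> real)
    \<Rightarrow> ('i \<Rightarrow> 'a \<Rightarrow> real) \<times> ('j \<Rightarrow> ('i \<Rightarrow> 'a) \<Rightarrow> real) \<Rightarrow> real" where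
  "objB I A J Ij h s = (case s of (g, p) \<Rightarrow>
     (\<Sum>i \<in> Yset I J Ij. \<Sum>a \<in> A i. ln (h i a) * g i a))"

definition optB where
  "optB I A J Ij Bj h s \<longleftrightarrow> feasB I A J Ij Bj s \<and>
     (\<forall>s'. feasB I A J Ij Bj s' \<longrightarrow> objB I A J Ij h s' \<le> objB I A J Ij h s)"

definition integralB :: "'i set \<Rightarrow> ('i \<Rightarrow> 'a set) \<Rightarrow> 'j set \<Rightarrow> ('j \<Rightarrow> 'i set)
    \<Rightarrow> ('j \<Rightarrow> ('i \<Rightarrow> 'a) set)
    \<Rightarrow> ('i \<Rightarrow> 'a \<Rightarrow> real) \<times> ('j \<Rightarrow> ('i \<Rightarrow> 'a) \<Rightarrow> real) \<Rightarrow> bool" where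
  "integralB I A J Ij Bj s = (case s of (g, p) \<Rightarrow>
     (\<forall>i \<in> I. \<forall>a \<in> A i. g i a \<in> \<int>) \<and>
     (\<forall>j \<in> Lset J Ij. \<forall>b \<in> Bj j. p j b \<in> \<int>))"

definition XiB_inv :: "'i set \<Rightarrow> ('i \<Rightarrow> 'a set) \<Rightarrow> ('i \<Rightarrow> 'a \<Rightarrow> real) \<Rightarrow> ('i \<Rightarrow> 'a)" where
  "XiB_inv I A g = (THE x. x \<in> Pi\<^sub>E I A \<and>
     (\<forall>i \<in> I. \<forall>\<gamma> \<in> A i. g i \<gamma> = (if \<gamma> = x i then 1 else 0)))"

definition outB where
  "outB I A J Ij Bj s =
     (if integralB I A J Ij Bj s then Config (XiB_inv I A (fst s)) else Failure)"

definition is_opt_config where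
  "is_opt_config I A J Ij Bj h x \<longleftrightarrow> x \<in> Bset I A J Ij Bj \<and>
     (\<forall>y \<in> Bset I A J Ij Bj. (\<Sum>i \<in> Yset I J Ij. ln (h i (y i))) \<le> (\<Sum>i \<in> Yset I J Ij. ln (h i (x i))))"

end

theory Submission
  imports Defs
begin


locale LPset =
  fixes I :: "'i set" and J :: "'j set" and A :: "'i \<Rightarrow> 'a set"
    and Ij :: "'j \<Rightarrow> 'i set" and h :: "'i \<Rightarrow> 'a \<Rightarrow> real"
    and Bj :: "'j \<Rightarrow> ('i \<Rightarrow> 'a) set" and \<alpha> :: "'i \<Rightarrow> 'a" and t :: "'i \<Rightarrow> 'j"
  assumes a1: "finite I" and a2: "finite J"
    and a3: "\<forall>i \<in> I. finite (A i) \<and> 2 \<le> card (A i)"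
    and a4: "\<forall>j \<in> J. Ij j \<subseteq> I"
    and a5: "\<forall>i \<in> Yset I J Ij. \<forall>a \<in> A i. 0 < h i a"
    and a6: "\<forall>j \<in> Lset J Ij. Bj j \<subseteq> Pi\<^sub>E (Ij j) A"
    and a7: "inj_on (\<lambda>x. restrict x (Yset I J Ij)) (Bset I A J Ij Bj)"
    and a8: "\<forall>i \<in> I. \<alpha> i \<in> A i"
    and a9: "\<forall>i \<in> I - Yset I J Ij. t i \<in> Jset J Ij i"
    and a10: "\<forall>i \<in> Yset I J Ij. Jset J Ij i \<inter> Lset J Ij \<noteq> {}"
begin

abbreviation "LL \<equiv> Lset J Ij"
abbreviation "YY \<equiv> Yset I J Ij"
abbreviation "mg \<equiv> marg Bj"

lemma L_facts: assumes "j \<in> LL" shows "j \<in> J" "Ij j \<subseteq> I" "finite (Ij j)" "finite (Bj j)"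
proof -
  show j: "j \<in> J" using assms by (simp add: Lset_def)
  show s: "Ij j \<subseteq> I" using a4 j by blast
  show f: "finite (Ij j)" using s a1 finite_subset by blast
  have "finite (Pi\<^sub>E (Ij j) A)" using f s a3 by (intro finite_PiE) auto
  then show "finite (Bj j)" using a6 assms finite_subset by blast
qed

lemma Y_I: "i \<in> YY \<Longrightarrow> i \<in> I" by (simp add: Yset_def)

lemma nonY_L: assumes "i \<in> I - YY" "j \<in> Jset J Ij i" shows "j \<in> LL"
proof -
  have j: "j \<in> J" "i \<in> Ij j" using assms(2) by (auto simp: Jset_def)
  have fin: "finite (Ij j)" using a4 j a1 finite_subset by blast
  have "card (Ij j) \<noteq> 1" using assms by (auto simp: Yset_def)
  moreover have "card (Ij j) \<noteq> 0" using fin j by auto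
  ultimately show ?thesis using j by (simp add: Lset_def)
qed

lemma ex_L: assumes "i \<in> I" shows "\<exists>j. j \<in> LL \<and> i \<in> Ij j"
proof (cases "i \<in> YY")
  case True then show ?thesis using a10 by (auto simp: Jset_def)
next
  case False
  then have "t i \<in> Jset J Ij i" using a9 assms by auto
  then show ?thesis using nonY_L False assms by (auto simp: Jset_def)
qed

definition ji where "ji i = (SOME j. j \<in> LL \<and> i \<in> Ij j)"
definition G where "G p i a = marg Bj p (ji i) i a"

lemma ji: "i \<in> I \<Longrightarrow> ji i \<in> LL \<and> i \<in> Ij (ji i)"
  unfolding ji_def using ex_L by (rule someI_ex) 

lemma Bj_mem: "j \<in> LL \<Longrightarrow> b \<in> Bj j \<Longrightarrow> i \<in> Ij j \<Longrightarrow> b i \<in> A i"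
  using a6 by (auto simp: PiE_def Pi_def)

lemma marg_sum: assumes "j \<in> LL" "i \<in> Ij j"
  shows "(\<Sum>a\<in>A i. mg p j i a) = (\<Sum>b\<in>Bj j. p j b)"
proof -
  have "i \<in> I" using L_facts assms by blast
  then have "finite (A i)" using a3 by auto
  then show ?thesis unfolding marg_def
    using sum.group[of "Bj j" "A i" "\<lambda>b. b i" "p j"] L_facts(4)[OF assms(1)] Bj_mem[OF assms(1) _ assms(2)]
    by auto
qed

lemma marg_alpha: assumes "j \<in> LL" "i \<in> Ij j" "(\<Sum>b\<in>Bj j. p j b) = 1"
  shows "mg p j i (\<alpha> i) = 1 - (\<Sum>a\<in>A i - {\<alpha> i}. mg p j i a)"
proof -
  have "i \<in> I" using L_facts assms by blast
  then have "finite (A i)" "\<alpha> i \<in> A i" using a3 a8 by auto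
  then show ?thesis using marg_sum[OF assms(1,2), of p] assms(3) sum.remove by (metis add_diff_cancel_right')
qed

end

context LPset begin

abbreviation "fB \<equiv> feasB I A J Ij Bj"
abbreviation "fA \<equiv> feasA I A J Ij Bj \<alpha> t"

lemma feasB_A: "fB (g,p) \<Longrightarrow> fA (g,p)"
  unfolding feasB_def feasA_def
proof (clarsimp, intro conjI ballI)
  fix i j a
  assume h: "\<forall>j\<in>LL. \<forall>i\<in>Ij j. \<forall>a\<in>A i. g i a = mg p j i a"
  { assume "i \<in> YY" "j \<in> Jset J Ij i \<inter> LL" "a \<in> A i - {\<alpha> i}"
    then show "g i a = mg p j i a" using h by (auto simp: Jset_def) }
  { assume i: "i \<in> I - YY" and j: "j \<in> Jset J Ij i - {t i}" and a: "a \<in> A i - {\<alpha> i}"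
    have t: "t i \<in> Jset J Ij i" using a9 i by auto
    have "j \<in> LL" "t i \<in> LL" using nonY_L i j t by auto
    moreover have "i \<in> Ij j" "i \<in> Ij (t i)" using j t by (auto simp: Jset_def)
    ultimately have "g i a = mg p j i a" "g i a = mg p (t i) i a" using h a by blast+
    then show "mg p j i a = mg p (t i) i a" by simp }
qed

lemma feasB_G: "fB (g,p) \<Longrightarrow> i \<in> I \<Longrightarrow> a \<in> A i \<Longrightarrow> g i a = G p i a"
  unfolding feasB_def G_def using ji by auto

lemma feasB_sum1: assumes "fB (g,p)" "i \<in> I" shows "(\<Sum>a\<in>A i. g i a) = 1"
proof -
  have "(\<Sum>a\<in>A i. g i a) = (\<Sum>a\<in>A i. mg p (ji i) i a)"
    using feasB_G[OF assms(1)] assms(2) by (simp add: G_def)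
  also have "\<dots> = 1" using marg_sum ji[OF assms(2)] assms(1) by (simp add: feasB_def)
  finally show ?thesis .
qed

lemma feasA_marg_eq:
  assumes f: "fA (gt,p)" and j: "j \<in> LL" "i \<in> Ij j" and k: "k \<in> LL" "i \<in> Ij k"
    and a: "a \<in> A i - {\<alpha> i}"
  shows "mg p j i a = mg p k i a"
proof -
  have iI: "i \<in> I" using L_facts j by blast
  have jJ: "j \<in> Jset J Ij i" "k \<in> Jset J Ij i" using j k L_facts by (auto simp: Jset_def)
  show ?thesis
  proof (cases "i \<in> YY")
    case True
    have X: "\<forall>j\<in>Jset J Ij i \<inter> LL. \<forall>a\<in>A i - {\<alpha> i}. gt i a = mg p j i a"
      using f True unfolding feasA_def by auto
    have e1: "gt i a = mg p j i a" by (rule bspec[OF bspec[OF X IntI[OF jJ(1) j(1)]] a])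
    have e2: "gt i a = mg p k i a" by (rule bspec[OF bspec[OF X IntI[OF jJ(2) k(1)]] a])
    show ?thesis using e1 e2 by (rule subst)
  next
    case False
    have N: "\<forall>j\<in>Jset J Ij i - {t i}. \<forall>a\<in>A i - {\<alpha> i}. mg p j i a = mg p (t i) i a"
      using f False iI unfolding feasA_def by auto
    have E: "mg p l i a = mg p (t i) i a" if "l \<in> Jset J Ij i" for l
    proof (cases "l = t i")
      case False then show ?thesis using bspec[OF bspec[OF N] a] that by blast
    qed simp
    show ?thesis using E[OF jJ(1)] E[OF jJ(2)] by simp
  qed
qed

lemma feasA_marg_eq_all:
  assumes f: "fA (gt,p)" and j: "j \<in> LL" "i \<in> Ij j" and k: "k \<in> LL" "i \<in> Ij k"
    and a: "a \<in> A i"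
  shows "mg p j i a = mg p k i a"
proof (cases "a = \<alpha> i")
  case True
  have s: "(\<Sum>b\<in>Bj j. p j b) = 1" "(\<Sum>b\<in>Bj k. p k b) = 1" using f j k by (auto simp: feasA_def)
  have "(\<Sum>a\<in>A i - {\<alpha> i}. mg p j i a) = (\<Sum>a\<in>A i - {\<alpha> i}. mg p k i a)"
    using feasA_marg_eq[OF f j k] by (rule sum.cong[OF refl])
  moreover have "mg p j i (\<alpha> i) = 1 - (\<Sum>a\<in>A i - {\<alpha> i}. mg p j i a)" using j s(1) by (rule marg_alpha[of j i p])
  moreover have "mg p k i (\<alpha> i) = 1 - (\<Sum>a\<in>A i - {\<alpha> i}. mg p k i a)" using k s(2) by (rule marg_alpha[of k i p])
  ultimately show ?thesis using True by simp
next
  case False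
  then show ?thesis using feasA_marg_eq[OF f j k] a by blast
qed

lemma feasA_B: assumes f: "fA (gt,p)" shows "fB (G p, p)"
  unfolding feasB_def prod.case
proof (intro conjI ballI)
  show "\<And>j b. j \<in> LL \<Longrightarrow> b \<in> Bj j \<Longrightarrow> 0 \<le> p j b" "\<And>j. j\<in>LL \<Longrightarrow> sum (p j) (Bj j) = 1"
    using f by (auto simp: feasA_def)
  fix j i a assume j: "j \<in> LL" and i: "i \<in> Ij j" and a: "a \<in> A i"
  have iI: "i \<in> I" using L_facts j i by blast
  show "G p i a = mg p j i a" unfolding G_def
    using feasA_marg_eq_all[OF f ji[OF iI, THEN conjunct1] ji[OF iI, THEN conjunct2] j i a] .
qed

lemma feasA_G: assumes f: "fA (gt,p)" "i \<in> YY" "a \<in> A i - {\<alpha> i}" shows "gt i a = G p i a"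
proof -
  have iI: "i \<in> I" using Y_I f by blast
  obtain j where j: "j \<in> Jset J Ij i \<inter> LL" using a10 f by blast
  have "gt i a = mg p j i a" using f j unfolding feasA_def by auto
  also have "\<dots> = G p i a" unfolding G_def
    using j by (intro feasA_marg_eq[OF f(1) _ _ ji[OF iI, THEN conjunct1] ji[OF iI, THEN conjunct2] f(3)]) (auto simp: Jset_def)
  finally show ?thesis .
qed

end

context LPset begin

abbreviation "oB \<equiv> objB I A J Ij h"
abbreviation "oA \<equiv> objA I A J Ij h \<alpha>"
definition "cc = (\<Sum>i\<in>YY. ln (h i (\<alpha> i)))"

lemma obj_i: assumes i: "i \<in> YY" and s: "(\<Sum>a\<in>A i. g i a) = 1"
  shows "(\<Sum>a\<in>A i. ln (h i a) * g i a) = ln (h i (\<alpha> i)) + (\<Sum>a\<in>A i-{\<alpha> i}. ln (h i a / h i (\<alpha> i)) * g i a)"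
proof -
  have iI: "i \<in> I" using Y_I i by blast
  have fin: "finite (A i)" and al: "\<alpha> i \<in> A i" using a3 a8 iI by auto
  have pos: "\<And>a. a \<in> A i \<Longrightarrow> 0 < h i a" using a5 i by auto
  have "(\<Sum>a\<in>A i-{\<alpha> i}. ln (h i a / h i (\<alpha> i)) * g i a)
      = (\<Sum>a\<in>A i-{\<alpha> i}. ln (h i a) * g i a - ln (h i (\<alpha> i)) * g i a)"
  proof (rule sum.cong[OF refl])
    fix x assume x: "x \<in> A i - {\<alpha> i}"
    have "ln (h i x / h i (\<alpha> i)) = ln (h i x) - ln (h i (\<alpha> i))"
      using pos[of x] pos[OF al] x by (simp add: ln_div)
    then show "ln (h i x / h i (\<alpha> i)) * g i x = ln (h i x) * g i x - ln (h i (\<alpha> i)) * g i x"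
      by (simp add: left_diff_distrib)
  qed
  also have "\<dots> = (\<Sum>a\<in>A i-{\<alpha> i}. ln (h i a) * g i a) - ln (h i (\<alpha> i)) * (\<Sum>a\<in>A i-{\<alpha> i}. g i a)"
    by (simp add: sum_subtractf sum_distrib_left)
  finally have e: "(\<Sum>a\<in>A i-{\<alpha> i}. ln (h i a / h i (\<alpha> i)) * g i a)
      = (\<Sum>a\<in>A i-{\<alpha> i}. ln (h i a) * g i a) - ln (h i (\<alpha> i)) * (\<Sum>a\<in>A i-{\<alpha> i}. g i a)" .
  have s1: "(\<Sum>a\<in>A i. g i a) = g i (\<alpha> i) + (\<Sum>a\<in>A i-{\<alpha> i}. g i a)" using sum.remove[OF fin al] .
  have s2: "(\<Sum>a\<in>A i. ln (h i a) * g i a) = ln (h i (\<alpha> i)) * g i (\<alpha> i) + (\<Sum>a\<in>A i-{\<alpha> i}. ln (h i a) * g i a)"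
    using sum.remove[OF fin al] .
  have ga: "g i (\<alpha> i) = 1 - (\<Sum>a\<in>A i-{\<alpha> i}. g i a)" using s1 s by linarith
  show ?thesis by (simp only: s2 e ga) (simp add: algebra_simps)
qed

lemma objBA: assumes f: "fB (g,p)" and e: "\<forall>i\<in>YY. \<forall>a\<in>A i-{\<alpha> i}. gt i a = g i a"
  shows "oB (g,p) = cc + oA (gt,q)"
proof -
  have "oB (g,p) = (\<Sum>i\<in>YY. ln (h i (\<alpha> i)) + (\<Sum>a\<in>A i-{\<alpha> i}. ln (h i a / h i (\<alpha> i)) * g i a))"
    unfolding objB_def prod.case
    using obj_i feasB_sum1[OF f] Y_I by (intro sum.cong) auto
  also have "\<dots> = cc + (\<Sum>i\<in>YY. (\<Sum>a\<in>A i-{\<alpha> i}. ln (h i a / h i (\<alpha> i)) * gt i a))"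
    unfolding cc_def sum.distrib using e by (intro arg_cong2[where f="(+)"] refl sum.cong) auto
  also have "\<dots> = cc + oA (gt,q)" unfolding objA_def by simp
  finally show ?thesis .
qed

lemma objBA_G: assumes f: "fA (gt,p)" shows "oB (G p, p) = cc + oA (gt,p)"
  using objBA[OF feasA_B[OF f]] feasA_G[OF f] by auto

abbreviation "opB \<equiv> optB I A J Ij Bj h"
abbreviation "opA \<equiv> optA I A J Ij Bj h \<alpha> t"

lemma optB_A: assumes o: "opB (g,p)" shows "opA (g,p)"
  unfolding optA_def
proof (intro conjI allI impI)
  have f: "fB (g,p)" using o by (simp add: optB_def)
  show "fA (g,p)" using feasB_A[OF f] .
  fix s' assume f': "fA s'"
  obtain gt' p' where s': "s' = (gt',p')" by (cases s')
  have "cc + oA s' = oB (G p', p')" using objBA_G f' s' by simp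
  also have "\<dots> \<le> oB (g,p)" using o feasA_B f' s' by (simp add: optB_def)
  also have "\<dots> = cc + oA (g,p)" using objBA[OF f, of g p] by simp
  finally show "oA s' \<le> oA (g,p)" by simp
qed

lemma optA_B: assumes o: "opA (gt,p)" shows "opB (G p,p)"
  unfolding optB_def
proof (intro conjI allI impI)
  have f: "fA (gt,p)" using o by (simp add: optA_def)
  show "fB (G p,p)" using feasA_B[OF f] .
  fix s' assume f': "fB s'"
  obtain g' p' where s': "s' = (g',p')" by (cases s')
  have "oB s' = cc + oA s'" using objBA[of g' p' g' p'] f' s' by simp
  also have "\<dots> \<le> cc + oA (gt,p)" using o feasB_A f' s' by (simp add: optA_def)
  also have "\<dots> = oB (G p, p)" using objBA_G[OF f] by simp
  finally show "oB s' \<le> oB (G p,p)" .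
qed

end


lemma int01:
  fixes p :: "'b \<Rightarrow> real"
  assumes fin: "finite S" and ip: "\<forall>b\<in>S. p b \<in> \<int> \<and> 0 \<le> p b" and s: "sum p S = 1"
  shows "\<exists>b0\<in>S. \<forall>b\<in>S. p b = (if b = b0 then 1 else 0)"
proof -
  have le1: "p b \<le> 1" if "b \<in> S" for b
    using member_le_sum[of b S p] that ip fin s by auto
  have zo: "p b = 0 \<or> p b = 1" if b: "b \<in> S" for b
  proof -
    obtain n where n: "p b = of_int n" using ip b Ints_cases by blast
    have "0 \<le> n" "n \<le> 1" using le1[OF b] ip b n by auto
    then have "n = 0 \<or> n = 1" by auto
    then show ?thesis using n by auto
  qed
  have "\<exists>b0\<in>S. p b0 \<noteq> 0"
  proof (rule ccontr)
    assume "\<not> ?thesis" then have "sum p S = 0" by simp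
    then show False using s by simp
  qed
  then obtain b0 where b0: "b0 \<in> S" "p b0 = 1" using zo by blast
  have "p b = 0" if b: "b \<in> S" "b \<noteq> b0" for b
  proof -
    have "sum p {b, b0} \<le> sum p S" using b b0 ip fin by (intro sum_mono2) auto
    then have "p b + p b0 \<le> 1" using b s by simp
    then show ?thesis using b0 zo[OF b(1)] by auto
  qed
  then show ?thesis using b0 by auto
qed

context LPset begin

abbreviation "BB \<equiv> Bset I A J Ij Bj"
definition "pint p = (\<forall>j\<in>LL. \<forall>b\<in>Bj j. p j b \<in> \<int>)"


lemma G_Int: assumes "pint p" "i \<in> I" shows "G p i a \<in> \<int>"
  unfolding G_def marg_def using assms ji[OF assms(2)] by (auto simp: pint_def intro!: Ints_sum)

lemma intB: assumes "fB (g,p)" shows "integralB I A J Ij Bj (g,p) = pint p"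
  using feasB_G[OF assms] G_Int unfolding integralB_def pint_def by auto

lemma intBG: assumes "fB (g,p)" shows "integralB I A J Ij Bj (G p,p) = pint p"
  using G_Int unfolding integralB_def pint_def by auto

lemma intA: assumes "fA (gt,p)" shows "integralA I A J Ij Bj \<alpha> (gt,p) = pint p"
  using feasA_G[OF assms] G_Int Y_I unfolding integralA_def pint_def by auto

lemma K: assumes f: "fB (g,p)" and pi: "pint p"
  shows "\<exists>x\<in>BB. \<forall>i\<in>I. \<forall>a\<in>A i. g i a = (if a = x i then 1 else 0)"
proof -
  have "\<forall>j\<in>LL. \<exists>b0\<in>Bj j. \<forall>b\<in>Bj j. p j b = (if b = b0 then 1 else 0)"
  proof
    fix j assume j: "j \<in> LL"
    show "\<exists>b0\<in>Bj j. \<forall>b\<in>Bj j. p j b = (if b = b0 then 1 else 0)"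
      using f pi j L_facts(4)[OF j] by (intro int01) (auto simp: feasB_def pint_def)
  qed
  then obtain bs where bs: "\<And>j. j \<in> LL \<Longrightarrow> bs j \<in> Bj j \<and> (\<forall>b\<in>Bj j. p j b = (if b = bs j then 1 else 0))"
    by metis
  have mgj: "mg p j i a = (if bs j i = a then 1 else 0)" if j: "j \<in> LL" for j i a
  proof -
    have "mg p j i a = (\<Sum>b\<in>{b\<in>Bj j. b i = a}. if bs j = b then 1 else 0)"
      unfolding marg_def using bs[OF j] by (intro sum.cong) auto
    also have "\<dots> = (if bs j i = a then 1 else 0)"
      using L_facts(4)[OF j] bs[OF j] by (subst sum.delta') auto
    finally show ?thesis .
  qed
  define x where "x = (\<lambda>i. if i \<in> I then bs (ji i) i else undefined)"
  have gx: "g i a = (if a = x i then 1 else 0)" if i: "i \<in> I" and a: "a \<in> A i" for i a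
    using feasB_G[OF f i a] mgj[OF ji[OF i, THEN conjunct1]] i unfolding G_def x_def by auto
  have xP: "x \<in> Pi\<^sub>E I A"
  proof -
    have "bs (ji i) i \<in> A i" if i: "i \<in> I" for i
      using Bj_mem[of "ji i" "bs (ji i)" i] bs[of "ji i"] ji[OF i] by blast
    then show ?thesis unfolding x_def by (auto simp: PiE_def Pi_def extensional_def)
  qed
  have rj: "restrict x (Ij j) = bs j" if j: "j \<in> LL" for j
  proof
    fix i show "restrict x (Ij j) i = bs j i"
    proof (cases "i \<in> Ij j")
      case True
      have iI: "i \<in> I" using L_facts(2)[OF j] True by blast
      have xa: "x i \<in> A i" using xP iI by (auto simp: PiE_def)
      have "g i (x i) = mg p j i (x i)" using f j True xa by (auto simp: feasB_def)
      then have "bs j i = x i" using gx[OF iI xa] mgj[OF j] by (auto split: if_splits)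
      then show ?thesis using True by simp
    next
      case False
      have "bs j \<in> Pi\<^sub>E (Ij j) A" using bs[OF j] a6 j by blast
      then show ?thesis using False by (auto simp: PiE_def extensional_def)
    qed
  qed
  have "x \<in> BB" unfolding Bset_def using xP rj bs by auto
  then show ?thesis using gx by blast
qed

lemma XiB: assumes "x \<in> Pi\<^sub>E I A" "\<forall>i\<in>I. \<forall>a\<in>A i. g i a = (if a = x i then 1 else 0)"
  shows "XiB_inv I A g = x"
  unfolding XiB_inv_def
proof (rule the_equality)
  show "x \<in> Pi\<^sub>E I A \<and> (\<forall>i\<in>I. \<forall>\<gamma>\<in>A i. g i \<gamma> = (if \<gamma> = x i then 1 else 0))" using assms by auto
  fix y assume y: "y \<in> Pi\<^sub>E I A \<and> (\<forall>i\<in>I. \<forall>\<gamma>\<in>A i. g i \<gamma> = (if \<gamma> = y i then 1 else 0))"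
  show "y = x"
  proof (rule PiE_ext[OF conjunct1[OF y] assms(1)])
    fix i assume i: "i \<in> I"
    have "y i \<in> A i" using y i by (auto simp: PiE_def)
    then have "g i (y i) = 1" using y i by auto
    then show "y i = x i" using assms(2) i \<open>y i \<in> A i\<close> by (auto split: if_splits)
  qed
qed

lemma XiA: assumes x: "x \<in> Pi\<^sub>E I A" and g: "\<forall>i\<in>YY. \<forall>a\<in>A i - {\<alpha> i}. gt i a = (if a = x i then 1 else 0)"
  shows "XiA_inv I A J Ij \<alpha> gt = restrict x YY"
  unfolding XiA_inv_def
proof (rule the_equality)
  have "restrict x YY \<in> Pi\<^sub>E YY A" using x Y_I by (auto simp: PiE_def)
  then show "restrict x YY \<in> Pi\<^sub>E YY A \<and> (\<forall>i\<in>YY. \<forall>\<gamma>\<in>A i - {\<alpha> i}. gt i \<gamma> = (if \<gamma> = restrict x YY i then 1 else 0))"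
    using g by auto
  fix y assume y: "y \<in> Pi\<^sub>E YY A \<and> (\<forall>i\<in>YY. \<forall>\<gamma>\<in>A i - {\<alpha> i}. gt i \<gamma> = (if \<gamma> = y i then 1 else 0))"
  show "y = restrict x YY"
  proof (rule PiE_ext[OF conjunct1[OF y]])
    show "restrict x YY \<in> Pi\<^sub>E YY A" using x Y_I by (auto simp: PiE_def)
    fix i assume i: "i \<in> YY"
    have yi: "y i \<in> A i" using y i by (auto simp: PiE_def)
    have xi: "x i \<in> A i" using x Y_I[OF i] by (auto simp: PiE_def)
    show "y i = restrict x YY i"
    proof (cases "y i = \<alpha> i")
      case False
      then have "gt i (y i) = 1" using y i yi by auto
      then show ?thesis using g i yi False by (auto split: if_splits)
    next
      case True
      show ?thesis
      proof (rule ccontr)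
        assume ne: "y i \<noteq> restrict x YY i"
        then have "x i \<noteq> \<alpha> i" using True i by auto
        then have "gt i (x i) = 1" using g i xi by auto
        moreover have "gt i (x i) = 0" using y i xi \<open>x i \<noteq> \<alpha> i\<close> ne by auto
        ultimately show False by simp
      qed
    qed
  qed
qed

lemma PY: assumes "x \<in> BB" shows "PY_inv I A J Ij Bj (restrict x YY) = x"
  unfolding PY_inv_def
  using assms a7 by (intro the_equality) (auto simp: inj_on_def)

end

context LPset begin

lemma outAB: assumes f: "fA (gt,p)"
  shows "outA I A J Ij Bj \<alpha> (gt,p) = outB I A J Ij Bj (G p,p)"
proof -
  have fB: "fB (G p, p)" using feasA_B[OF f] .
  show ?thesis
  proof (cases "pint p")
    case False
    then show ?thesis unfolding outA_def outB_def using intA[OF f] intBG[OF fB] by simp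
  next
    case True
    obtain x where x: "x \<in> BB" "\<forall>i\<in>I. \<forall>a\<in>A i. G p i a = (if a = x i then 1 else 0)"
      using K[OF fB True] by blast
    have xP: "x \<in> Pi\<^sub>E I A" using x(1) by (simp add: Bset_def)
    have "XiB_inv I A (G p) = x" using XiB[OF xP x(2)] .
    moreover have "XiA_inv I A J Ij \<alpha> gt = restrict x YY"
      using feasA_G[OF f] x(2) Y_I by (intro XiA[OF xP]) auto
    ultimately show ?thesis unfolding outA_def outB_def using intA[OF f] intBG[OF fB] True PY[OF x(1)] by simp
  qed
qed

lemma outBB: assumes f: "fB (g,p)"
  shows "outB I A J Ij Bj (g,p) = outB I A J Ij Bj (G p,p)"
proof -
  have fB: "fB (G p, p)" using feasA_B[OF feasB_A[OF f]] .
  show ?thesis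
  proof (cases "pint p")
    case False
    then show ?thesis unfolding outB_def using intB[OF f] intBG[OF fB] by simp
  next
    case True
    obtain x where x: "x \<in> BB" "\<forall>i\<in>I. \<forall>a\<in>A i. G p i a = (if a = x i then 1 else 0)"
      using K[OF fB True] by blast
    have xP: "x \<in> Pi\<^sub>E I A" using x(1) by (simp add: Bset_def)
    have "XiB_inv I A (G p) = x" using XiB[OF xP x(2)] .
    moreover have "XiB_inv I A g = x" using feasB_G[OF f] x(2) by (intro XiB[OF xP]) auto
    ultimately show ?thesis unfolding outB_def using intB[OF f] intBG[OF fB] True by simp
  qed
qed

lemma sum_ind: assumes "i \<in> I" "y \<in> Pi\<^sub>E I A"
  shows "(\<Sum>a\<in>A i. ln (h i a) * (if a = y i then 1 else 0)) = ln (h i (y i))"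
proof -
  have "finite (A i)" "y i \<in> A i" using assms a3 by (auto simp: PiE_def)
  then show ?thesis by (simp add: if_distrib cong: if_cong)
qed

lemma optconfB: assumes o: "opB (g,p)" and out: "outB I A J Ij Bj (g,p) = Config x"
  shows "is_opt_config I A J Ij Bj h x"
proof -
  have f: "fB (g,p)" using o by (simp add: optB_def)
  have pi: "pint p" using out intB[OF f] by (simp add: outB_def split: if_splits)
  obtain x0 where x0: "x0 \<in> BB" "\<forall>i\<in>I. \<forall>a\<in>A i. g i a = (if a = x0 i then 1 else 0)"
    using K[OF f pi] by blast
  have xP: "x0 \<in> Pi\<^sub>E I A" using x0(1) by (simp add: Bset_def)
  have "x = x0" using out XiB[OF xP x0(2)] intB[OF f] pi by (simp add: outB_def)
  have ox: "oB (g,p) = (\<Sum>i\<in>YY. ln (h i (x0 i)))"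
    unfolding objB_def prod.case using x0(2) Y_I sum_ind[OF _ xP] by (intro sum.cong) auto
  show ?thesis unfolding is_opt_config_def
  proof (intro conjI ballI)
    show "x \<in> BB" using \<open>x = x0\<close> x0 by simp
    fix y assume y: "y \<in> BB"
    have yP: "y \<in> Pi\<^sub>E I A" and yr: "\<forall>j\<in>LL. restrict y (Ij j) \<in> Bj j" using y by (auto simp: Bset_def)
    define sy where "sy = ((\<lambda>i a. if a = y i then 1 else 0)::'i \<Rightarrow> 'a \<Rightarrow> real,
        (\<lambda>j b. if b = restrict y (Ij j) then 1 else 0)::'j \<Rightarrow> ('i \<Rightarrow> 'a) \<Rightarrow> real)"
    have "fB sy" unfolding feasB_def sy_def prod.case
    proof (intro conjI ballI)
      fix j assume j: "j \<in> LL"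
      show "(\<Sum>b\<in>Bj j. if b = restrict y (Ij j) then 1 else 0) = (1::real)"
        using L_facts(4)[OF j] yr j by (simp add: sum.delta)
      fix i a assume i: "i \<in> Ij j" and a: "a \<in> A i"
      have "mg (\<lambda>j b. if b = restrict y (Ij j) then 1 else 0) j i a = (if y i = a then 1 else 0)"
        unfolding marg_def using L_facts(4)[OF j] yr j i by (simp add: sum.delta)
      then show "(if a = y i then 1 else 0) = mg (\<lambda>j b. if b = restrict y (Ij j) then 1 else 0) j i a"
        by auto
    qed simp
    then have "oB sy \<le> oB (g,p)" using o unfolding optB_def by blast
    moreover have "oB sy = (\<Sum>i\<in>YY. ln (h i (y i)))"
      unfolding objB_def sy_def prod.case using Y_I sum_ind[OF _ yP] by (intro sum.cong) auto
    ultimately show "(\<Sum>i\<in>YY. ln (h i (y i))) \<le> (\<Sum>i\<in>YY. ln (h i (x i)))" using ox \<open>x = x0\<close> by simp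
  qed
qed

end

context LPset begin

lemma main: "{outB I A J Ij Bj s | s. optB I A J Ij Bj h s}
           = {outA I A J Ij Bj \<alpha> s | s. optA I A J Ij Bj h \<alpha> t s}
       \<and> (\<forall>s x. optA I A J Ij Bj h \<alpha> t s \<longrightarrow> outA I A J Ij Bj \<alpha> s = Config x
              \<longrightarrow> is_opt_config I A J Ij Bj h x)
       \<and> (\<forall>s x. optB I A J Ij Bj h s \<longrightarrow> outB I A J Ij Bj s = Config x
              \<longrightarrow> is_opt_config I A J Ij Bj h x)"
proof (intro conjI allI impI)
  show "{outB I A J Ij Bj s | s. opB s} = {outA I A J Ij Bj \<alpha> s | s. opA s}"
  proof (intro equalityI subsetI)
    fix z assume "z \<in> {outB I A J Ij Bj s | s. opB s}"
    then obtain g p where o: "opB (g,p)" and z: "z = outB I A J Ij Bj (g,p)" by auto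
    have f: "fB (g,p)" using o by (simp add: optB_def)
    have "z = outA I A J Ij Bj \<alpha> (g,p)" using z outBB[OF f] outAB[OF feasB_A[OF f]] by simp
    then show "z \<in> {outA I A J Ij Bj \<alpha> s | s. opA s}" using optB_A[OF o] by blast
  next
    fix z assume "z \<in> {outA I A J Ij Bj \<alpha> s | s. opA s}"
    then obtain g p where o: "opA (g,p)" and z: "z = outA I A J Ij Bj \<alpha> (g,p)" by auto
    have f: "fA (g,p)" using o by (simp add: optA_def)
    have "z = outB I A J Ij Bj (G p,p)" using z outAB[OF f] by simp
    then show "z \<in> {outB I A J Ij Bj s | s. opB s}" using optA_B[OF o] by blast
  qed
next
  fix s x assume o: "opA s" and out: "outA I A J Ij Bj \<alpha> s = Config x"
  obtain g p where s: "s = (g,p)" by (cases s)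
  have f: "fA (g,p)" using o s by (simp add: optA_def)
  show "is_opt_config I A J Ij Bj h x"
    using optconfB[OF optA_B[OF o[unfolded s]]] out outAB[OF f] s by simp
next
  fix s x assume o: "opB s" and out: "outB I A J Ij Bj s = Config x"
  obtain g p where s: "s = (g,p)" by (cases s)
  show "is_opt_config I A J Ij Bj h x" using optconfB o out s by simp
qed

end

theorem theorem1:
  fixes I :: "'i set" and J :: "'j set" and A :: "'i \<Rightarrow> 'a set"
    and Ij :: "'j \<Rightarrow> 'i set" and h :: "'i \<Rightarrow> 'a \<Rightarrow> real"
    and Bj :: "'j \<Rightarrow> ('i \<Rightarrow> 'a) set" and \<alpha> :: "'i \<Rightarrow> 'a" and t :: "'i \<Rightarrow> 'j"
  assumes "finite I" and "finite J"
    and "\<forall>i \<in> I. finite (A i) \<and> 2 \<le> card (A i)"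
    and "\<forall>j \<in> J. Ij j \<subseteq> I"
    and "\<forall>i \<in> Yset I J Ij. \<forall>a \<in> A i. 0 < h i a"
    and "\<forall>j \<in> Lset J Ij. Bj j \<subseteq> Pi\<^sub>E (Ij j) A"
    and "inj_on (\<lambda>x. restrict x (Yset I J Ij)) (Bset I A J Ij Bj)"
    and "\<forall>i \<in> I. \<alpha> i \<in> A i"
    and "\<forall>i \<in> I - Yset I J Ij. t i \<in> Jset J Ij i"
    and "\<forall>i \<in> Yset I J Ij. Jset J Ij i \<inter> Lset J Ij \<noteq> {}"
  shows "{outB I A J Ij Bj s | s. optB I A J Ij Bj h s}
           = {outA I A J Ij Bj \<alpha> s | s. optA I A J Ij Bj h \<alpha> t s}
       \<and> (\<forall>s x. optA I A J Ij Bj h \<alpha> t s \<longrightarrow> outA I A J Ij Bj \<alpha> s = Config x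
              \<longrightarrow> is_opt_config I A J Ij Bj h x)
       \<and> (\<forall>s x. optB I A J Ij Bj h s \<longrightarrow> outB I A J Ij Bj s = Config x
              \<longrightarrow> is_opt_config I A J Ij Bj h x)"
proof -
  interpret LPset I J A Ij h Bj \<alpha> t using assms by unfold_locales
  show ?thesis by (rule main)
qed


end
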